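(* Let $n\ge1$ and $\vec v,\vec w\in\hat N^n$. Then $\vec v<\vec w$ if and only if $\vec w^\dagger<\vec v^\dagger$ (componentwise order). Consequently, if $\mu$ denotes the Möbius function of the poset $(\hat N^n,\le)$, then $\mu(\vec v,\vec w)=\mu(\vec w^\dagger,\vec v^\dagger)$ for all $\vec v,\vec w\in\hat N^n$.
   Context: $\hat N^0=\{()\}$ (empty vector) and for $n\ge1$, $\hat N^n$ is the set of names of planar rooted binary trees with $n$ internal vertices; every element of $\hat N^n$, $n\ge1$, is uniquely $\vec v_l\vee\vec v_r:=(\vec v_l,1,p+1+\vec v_r)$ with $\vec v_l\in\hat N^p,\vec v_r\in\hat N^q$, $p+q+1=n$, where $k+(w_1,\dots,w_q)=(w_1+k,\dots,w_q+k)$. The dendriform involution $\dagger$ is defined by $()^\dagger=()$ and $(\vec v\vee\vec w)^\dagger=\vec w^\dagger\vee\vec v^\dagger$. Componentwise order: $\vec v\le\vec w$ iff $v_i\le w_i$ for all $i$; $<$ means $\le$ and $\neq$. *)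

theory Defs
  imports Main
begin

datatype btree = Leaf | Node btree btree

fun internal :: "btree \<Rightarrow> nat" where
  "internal Leaf = 0"
| "internal (Node l r) = Suc (internal l + internal r)"

fun tname :: "btree \<Rightarrow> nat list" where
  "tname Leaf = []"
| "tname (Node l r) = tname l @ [1] @ map (\<lambda>x. x + (internal l + 1)) (tname r)"

definition Nhat :: "nat \<Rightarrow> nat list set" where
  "Nhat n = {tname t | t. internal t = n}"

text \<open>Mirror of a tree; the dendriform involution on names is induced by it
  (every name has a unique decomposition v_l \<or> v_r, i.e. a unique tree).\<close>
fun mirror :: "btree \<Rightarrow> btree" where
  "mirror Leaf = Leaf"
| "mirror (Node l r) = Node (mirror r) (mirror l)"

definition dagger :: "nat list \<Rightarrow> nat list" where
  "dagger v = tname (mirror (THE t. tname t = v))"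

definition vle :: "nat list \<Rightarrow> nat list \<Rightarrow> bool" where
  "vle v w \<longleftrightarrow> length v = length w \<and> (\<forall>i < length v. v ! i \<le> w ! i)"

definition vlt :: "nat list \<Rightarrow> nat list \<Rightarrow> bool" where
  "vlt v w \<longleftrightarrow> vle v w \<and> v \<noteq> w"

text \<open>The recursion is unfolded with fuel card S, which exceeds the length of every chain in S.\<close>
fun mob_aux :: "nat \<Rightarrow> 'a set \<Rightarrow> ('a \<Rightarrow> 'a \<Rightarrow> bool) \<Rightarrow> 'a \<Rightarrow> 'a \<Rightarrow> int" where
  "mob_aux 0 S le x y = (if x = y then 1 else 0)"
| "mob_aux (Suc k) S le x y =
     (if x = y then 1
      else if le x y then - (\<Sum>z\<in>{z\<in>S. le x z \<and> le z y \<and> z \<noteq> y}. mob_aux k S le x z)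
      else 0)"

definition mobius :: "'a set \<Rightarrow> ('a \<Rightarrow> 'a \<Rightarrow> bool) \<Rightarrow> 'a \<Rightarrow> 'a \<Rightarrow> int" where
  "mobius S le x y = mob_aux (card S) S le x y"

end

theory Submission
  imports Defs
begin

fun la :: "btree \<Rightarrow> nat \<Rightarrow> nat \<Rightarrow> bool" where
  "la Leaf i j = False"
| "la (Node l r) i j = (if j < internal l then la l i j
     else if j = internal l then i < j
     else internal l < i \<and> la r (i - Suc (internal l)) (j - Suc (internal l)))"

fun ra :: "btree \<Rightarrow> nat \<Rightarrow> nat \<Rightarrow> bool" where
  "ra Leaf i j = False"
| "ra (Node l r) i j = (if i < internal l then ra l i j
     else if i = internal l then i < j \<and> j < Suc (internal l + internal r)
     else ra r (i - Suc (internal l)) (j - Suc (internal l)))"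

lemma la_bound: "la t i j \<Longrightarrow> i < j \<and> j < internal t"
  by (induction t arbitrary: i j) (fastforce split: if_splits)+

lemma ra_bound: "ra t i j \<Longrightarrow> i < j \<and> j < internal t"
  by (induction t arbitrary: i j) (fastforce split: if_splits)+

lemma len_tname[simp]: "length (tname t) = internal t"
  by (induction t) auto

lemma tname_nth: "j < internal t \<Longrightarrow> 1 \<le> tname t ! j \<and> tname t ! j \<le> Suc j"
proof (induction t arbitrary: j)
  case Leaf then show ?case by simp
next
  case (Node l r)
  show ?case
  proof (cases "j < internal l")
    case True then show ?thesis using Node by (simp add: nth_append)
  next
    case False
    have jr: "j = internal l \<or> j - Suc (internal l) < internal r" using Node.prems False by auto
    then show ?thesis using Node.prems Node.IH(2)[of "j - Suc (internal l)"] False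
      by (cases "j = internal l") (auto simp: nth_append)
  qed
qed

lemma la_tname: "i < j \<Longrightarrow> j < internal t \<Longrightarrow> la t i j \<longleftrightarrow> tname t ! j \<le> Suc i"
proof (induction t arbitrary: i j)
  case Leaf then show ?case by simp
next
  case (Node l r)
  show ?case
  proof (cases "j < internal l")
    case True then show ?thesis using Node by (simp add: nth_append)
  next
    case False
    show ?thesis
    proof (cases "j = internal l")
      case True then show ?thesis using Node.prems by (simp add: nth_append)
    next
      case False2: False
      have jr: "j - Suc (internal l) < internal r" using Node.prems False False2 by auto
      have e: "tname (Node l r) ! j = tname r ! (j - Suc (internal l)) + (internal l + 1)"
        using False False2 jr by (simp add: nth_append)
      show ?thesis
      proof (cases "internal l < i")
        case True
        then show ?thesis using Node.IH(2)[of "i - Suc (internal l)" "j - Suc (internal l)"] jr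
          Node.prems False False2 e by auto
      next
        case False3: False
        then show ?thesis using False False2 e tname_nth[OF jr] by auto
      qed
    qed
  qed
qed

lemma internal_mirror[simp]: "internal (mirror t) = internal t"
  by (induction t) auto

lemma mirror_mirror[simp]: "mirror (mirror t) = t"
  by (induction t) auto

lemma ra_mirror: "i < j \<Longrightarrow> j < internal t \<Longrightarrow>
   ra (mirror t) (internal t - 1 - j) (internal t - 1 - i) \<longleftrightarrow> la t i j"
proof (induction t arbitrary: i j)
  case Leaf then show ?case by simp
next
  case (Node l r)
  let ?p = "internal l" and ?q = "internal r"
  show ?case
  proof (cases "j < ?p")
    case True
    have "ra (mirror l) (?p - 1 - j) (?p - 1 - i) \<longleftrightarrow> la l i j" using Node.IH(1) Node.prems True by auto
    moreover have "?p + ?q - j - Suc ?q = ?p - 1 - j" "?p + ?q - i - Suc ?q = ?p - 1 - i" using True Node.prems by auto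
    ultimately show ?thesis using True Node.prems by auto
  next
    case False
    show ?thesis
    proof (cases "j = ?p")
      case True then show ?thesis using Node.prems by auto
    next
      case False2: False
      show ?thesis
      proof (cases "?p < i")
        case True
        have "ra (mirror r) (?q - 1 - (j - Suc ?p)) (?q - 1 - (i - Suc ?p)) \<longleftrightarrow> la r (i - Suc ?p) (j - Suc ?p)"
          apply (rule Node.IH(2)) using Node.prems True by auto
        moreover have e: "?q - 1 - (j - Suc ?p) = ?p + ?q - j" "?q - 1 - (i - Suc ?p) = ?p + ?q - i"
          using True Node.prems by auto
        ultimately have "ra (mirror r) (?p + ?q - j) (?p + ?q - i) \<longleftrightarrow> la r (i - Suc ?p) (j - Suc ?p)"
          by (simp only: e)
        then show ?thesis using True False False2 Node.prems by auto
      next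
        case False3: False
        have "\<not> ra (mirror r) (?p + ?q - j) (?p + ?q - i)" using ra_bound[of "mirror r"] False3 by fastforce
        then show ?thesis using False False2 False3 Node.prems by auto
      qed
    qed
  qed
qed

lemma ra_char: "ra t i j \<longleftrightarrow> i < j \<and> j < internal t \<and> (\<forall>k. i < k \<longrightarrow> k \<le> j \<longrightarrow> \<not> la t i k)"
proof (induction t arbitrary: i j)
  case Leaf then show ?case by simp
next
  case (Node l r)
  let ?p = "internal l" and ?q = "internal r"
  show ?case
  proof (cases "i < ?p")
    case True
    show ?thesis
    proof (cases "j < ?p")
      case True2: True
      have "(\<forall>k. i < k \<longrightarrow> k \<le> j \<longrightarrow> \<not> la (Node l r) i k) \<longleftrightarrow> (\<forall>k. i < k \<longrightarrow> k \<le> j \<longrightarrow> \<not> la l i k)"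
        using True2 by auto
      then show ?thesis using True True2 Node.IH(1) by auto
    next
      case False
      have "\<not> ra l i j" using ra_bound False by fastforce
      moreover have "la (Node l r) i ?p" using True by simp
      ultimately show ?thesis using True False by (auto intro!: exI[of _ ?p])
    qed
  next
    case False
    show ?thesis
    proof (cases "i = ?p")
      case True
      have "\<not> la (Node l r) i k" for k using True la_bound[of l i k] by auto
      then show ?thesis using True by auto
    next
      case False2: False
      let ?i = "i - Suc ?p"
      show ?thesis
      proof (cases "i < j")
        case True
        have "(\<forall>k. i < k \<longrightarrow> k \<le> j \<longrightarrow> \<not> la (Node l r) i k) \<longleftrightarrow>
              (\<forall>k. ?i < k \<longrightarrow> k \<le> j - Suc ?p \<longrightarrow> \<not> la r ?i k)"
        proof
          assume H: "\<forall>k. i < k \<longrightarrow> k \<le> j \<longrightarrow> \<not> la (Node l r) i k"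
          show "\<forall>k. ?i < k \<longrightarrow> k \<le> j - Suc ?p \<longrightarrow> \<not> la r ?i k"
          proof (intro allI impI)
            fix k assume "?i < k" "k \<le> j - Suc ?p"
            then show "\<not> la r ?i k" using H[rule_format, of "k + Suc ?p"] False False2 True by auto
          qed
        next
          assume H: "\<forall>k. ?i < k \<longrightarrow> k \<le> j - Suc ?p \<longrightarrow> \<not> la r ?i k"
          show "\<forall>k. i < k \<longrightarrow> k \<le> j \<longrightarrow> \<not> la (Node l r) i k"
          proof (intro allI impI)
            fix k assume "i < k" "k \<le> j"
            then show "\<not> la (Node l r) i k" using H[rule_format, of "k - Suc ?p"] False False2 True by auto
          qed
        qed
        then show ?thesis using Node.IH(2)[of ?i "j - Suc ?p"] False False2 True by auto
      next
        case False3: False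
        then show ?thesis using False False2 ra_bound[of r ?i "j - Suc ?p"] by auto
      qed
    qed
  qed
qed


lemma tname_root: "tname (Node l r) ! internal l = 1"
  by (simp add: nth_append)

lemma tname_right: "internal l < j \<Longrightarrow> j < internal (Node l r) \<Longrightarrow> tname (Node l r) ! j > 1"
proof -
  assume a: "internal l < j" "j < internal (Node l r)"
  then have jr: "j - Suc (internal l) < internal r" by auto
  have "tname (Node l r) ! j = tname r ! (j - Suc (internal l)) + (internal l + 1)"
    using a jr by (simp add: nth_append)
  then show ?thesis using tname_nth[OF jr] by simp
qed

lemma tname_inj: "tname s = tname t \<Longrightarrow> s = t"
proof (induction s arbitrary: t)
  case Leaf then show ?case by (cases t) auto
next
  case (Node l r)
  show ?case
  proof (cases t)
    case Leaf then show ?thesis using Node.prems by simp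
  next
    case (Node l2 r2)
    have len: "internal (Node l r) = internal t" using Node.prems len_tname by metis
    have "internal l = internal l2"
    proof (rule ccontr)
      assume "internal l \<noteq> internal l2"
      then consider "internal l < internal l2" | "internal l2 < internal l" by linarith
      then show False
      proof cases
        case 1
        have "internal l2 < internal t" using Node by simp
        then have "tname (Node l r) ! internal l2 > 1" using tname_right[OF 1] len by simp
        then show False using Node.prems \<open>t = _\<close> tname_root[of l2 r2] by simp
      next
        case 2
        have "internal l < internal (Node l r)" by simp
        then have "tname t ! internal l > 1" using tname_right[OF 2] len \<open>t = _\<close> by simp
        then show False using Node.prems \<open>t = _\<close> tname_root[of l r] by simp
      qed
    qed
    then have "tname l = tname l2 \<and> map (\<lambda>x. x + (internal l + 1)) (tname r) = map (\<lambda>x. x + (internal l + 1)) (tname r2)"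
      using Node.prems \<open>t = _\<close> by (simp add: append_eq_append_conv)
    moreover have "inj (\<lambda>x::nat. x + (internal l + 1))" by (simp add: inj_def)
    ultimately have "tname l = tname l2" "tname r = tname r2" by (auto dest: inj_map_eq_map)
    then show ?thesis using Node.IH \<open>t = _\<close> by simp
  qed
qed

lemma dagger_tname: "dagger (tname t) = tname (mirror t)"
proof -
  have "(THE s. tname s = tname t) = t" by (rule the_equality) (auto dest: tname_inj)
  then show ?thesis by (simp add: dagger_def)
qed

lemma vle_tname: "internal s = internal t \<Longrightarrow>
   vle (tname s) (tname t) \<longleftrightarrow> (\<forall>i j. la t i j \<longrightarrow> la s i j)"
proof
  assume e: "internal s = internal t" and v: "vle (tname s) (tname t)"
  show "\<forall>i j. la t i j \<longrightarrow> la s i j"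
  proof (intro allI impI)
    fix i j assume "la t i j"
    then have b: "i < j" "j < internal t" and "tname t ! j \<le> Suc i" using la_bound la_tname by blast+
    moreover have "tname s ! j \<le> tname t ! j" using v b by (simp add: vle_def)
    ultimately show "la s i j" using la_tname e by simp
  qed
next
  assume e: "internal s = internal t" and H: "\<forall>i j. la t i j \<longrightarrow> la s i j"
  show "vle (tname s) (tname t)" unfolding vle_def
  proof (intro conjI allI impI)
    show "length (tname s) = length (tname t)" using e by simp
  next
    fix j assume "j < length (tname s)"
    then have j: "j < internal t" "j < internal s" using e by auto
    show "tname s ! j \<le> tname t ! j"
    proof (rule ccontr)
      assume c: "\<not> ?thesis"
      define i where "i = tname t ! j - 1"
      have i: "i < j" using tname_nth[OF j(1)] tname_nth[OF j(2)] c i_def by auto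
      have "la t i j" using la_tname[OF i j(1)] i_def tname_nth[OF j(1)] by simp
      then have "la s i j" using H by blast
      then have "tname s ! j \<le> Suc i" using la_tname[OF i j(2)] by simp
      then show False using c i_def tname_nth[OF j(1)] by simp
    qed
  qed
qed

lemma vle_mirror: "internal s = internal t \<Longrightarrow> vle (tname s) (tname t) \<Longrightarrow>
   vle (tname (mirror t)) (tname (mirror s))"
proof -
  assume e: "internal s = internal t" and v: "vle (tname s) (tname t)"
  let ?n = "internal t"
  have H: "\<forall>i j. la t i j \<longrightarrow> la s i j" using vle_tname e v by blast
  have R: "ra s i j \<Longrightarrow> ra t i j" for i j using H e unfolding ra_char by metis
  have L: "la (mirror x) i j \<longleftrightarrow> ra x (internal x - 1 - j) (internal x - 1 - i)"
    if "i < j" "j < internal x" for x i j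
    using ra_mirror[of i j "mirror x"] that by simp
  show ?thesis
  proof (subst vle_tname)
    show "internal (mirror t) = internal (mirror s)" using e by simp
    show "\<forall>i j. la (mirror s) i j \<longrightarrow> la (mirror t) i j"
    proof (intro allI impI)
      fix i j assume a: "la (mirror s) i j"
      then have b: "i < j" "j < ?n" using la_bound e by fastforce+
      then show "la (mirror t) i j" using a L[of i j s] L[of i j t] R e by simp
    qed
  qed
qed

lemma Nhat_E: "v \<in> Nhat n \<Longrightarrow> (\<And>t. v = tname t \<Longrightarrow> internal t = n \<Longrightarrow> P) \<Longrightarrow> P"
  unfolding Nhat_def by blast

lemma dagger_Nhat: "v \<in> Nhat n \<Longrightarrow> dagger v \<in> Nhat n"
  by (erule Nhat_E) (auto simp: Nhat_def dagger_tname intro!: exI[of _ "mirror _"])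

lemma dagger_dagger: "v \<in> Nhat n \<Longrightarrow> dagger (dagger v) = v"
  by (erule Nhat_E) (simp add: dagger_tname)

lemma dagger_rev: "v \<in> Nhat n \<Longrightarrow> w \<in> Nhat n \<Longrightarrow> vle v w \<longleftrightarrow> vle (dagger w) (dagger v)"
proof -
  assume "v \<in> Nhat n" "w \<in> Nhat n"
  then obtain s t where "v = tname s" "internal s = n" "w = tname t" "internal t = n"
    by (metis Nhat_E)
  then show ?thesis using vle_mirror[of s t] vle_mirror[of "mirror t" "mirror s"]
    by (auto simp: dagger_tname)
qed

lemma finite_Nhat: "finite (Nhat n)"
proof -
  have "Nhat n \<subseteq> {xs. set xs \<subseteq> {..n} \<and> length xs = n}"
  proof
    fix v assume "v \<in> Nhat n"
    then obtain t where t: "v = tname t" "internal t = n" by (metis Nhat_E)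
    have "x \<le> n" if "x \<in> set v" for x
    proof -
      obtain j where "j < length v" "x = v ! j" using \<open>x \<in> set v\<close> by (metis in_set_conv_nth)
      then show ?thesis using tname_nth[of j t] t by simp
    qed
    then show "v \<in> {xs. set xs \<subseteq> {..n} \<and> length xs = n}" using t by auto
  qed
  moreover have "finite {xs. set xs \<subseteq> {..n} \<and> length xs = n}"
    by (rule finite_lists_length_eq) simp
  ultimately show ?thesis by (rule finite_subset)
qed

locale fpo =
  fixes S :: "'a set" and le :: "'a \<Rightarrow> 'a \<Rightarrow> bool"
  assumes fin: "finite S"
    and refl: "le x x"
    and trans: "le x y \<Longrightarrow> le y z \<Longrightarrow> le x z"
    and antisym: "le x y \<Longrightarrow> le y x \<Longrightarrow> x = y"
begin

lemma mob_stable: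
  assumes "x \<in> S"
  shows "y \<in> S \<Longrightarrow> card {z\<in>S. le x z \<and> le z y} \<le> k \<Longrightarrow> card {z\<in>S. le x z \<and> le z y} \<le> k' \<Longrightarrow>
     mob_aux k S le x y = mob_aux k' S le x y"
proof (induction k arbitrary: y k')
  case 0
  have "\<not> le x y \<or> x = y"
  proof (rule ccontr)
    assume "\<not> ?thesis"
    then have "x \<in> {z\<in>S. le x z \<and> le z y}" using assms refl by auto
    moreover have "card {z\<in>S. le x z \<and> le z y} = 0" using 0 by simp
    moreover have "finite {z\<in>S. le x z \<and> le z y}" using fin by simp
    ultimately show False by (metis card_0_eq empty_iff)
  qed
  then show ?case by (cases k') auto
next
  case (Suc k)
  show ?case
  proof (cases "x = y \<or> \<not> le x y")
    case True then show ?thesis by (cases k') auto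
  next
    case False
    have yS: "y \<in> S" using Suc.prems by simp
    have "{x, y} \<subseteq> {z\<in>S. le x z \<and> le z y}" using False assms refl yS by auto
    then have "card {x,y} \<le> card {z\<in>S. le x z \<and> le z y}" by (intro card_mono) (auto simp: fin)
    then have c2: "2 \<le> card {z\<in>S. le x z \<and> le z y}" using False by simp
    then obtain k0 where k0: "k' = Suc k0" using Suc.prems by (cases k') auto
    have "mob_aux k S le x z = mob_aux k0 S le x z" if z: "z \<in> {z\<in>S. le x z \<and> le z y \<and> z \<noteq> y}" for z
    proof (rule Suc.IH)
      show "z \<in> S" using z by simp
      have "{u\<in>S. le x u \<and> le u z} \<subset> {z\<in>S. le x z \<and> le z y}"
        proof
        show "{u\<in>S. le x u \<and> le u z} \<subseteq> {z\<in>S. le x z \<and> le z y}"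
          using z trans[of _ z y] by auto
        have "y \<notin> {u\<in>S. le x u \<and> le u z}" using z antisym[of z y] by auto
        moreover have "y \<in> {z\<in>S. le x z \<and> le z y}" using yS False refl[of y] by auto
        ultimately show "{u\<in>S. le x u \<and> le u z} \<noteq> {z\<in>S. le x z \<and> le z y}" by blast
      qed
      then have "card {u\<in>S. le x u \<and> le u z} < card {z\<in>S. le x z \<and> le z y}"
        by (intro psubset_card_mono) (auto simp: fin)
      then show "card {u\<in>S. le x u \<and> le u z} \<le> k" "card {u\<in>S. le x u \<and> le u z} \<le> k0"
        using Suc.prems k0 by auto
    qed
    then show ?thesis using False k0 by simp
  qed
qed


lemma mob_rec:
  assumes x: "x \<in> S" and y: "y \<in> S" and ne: "x \<noteq> y" and l: "le x y"
  shows "mob_aux (card S) S le x y = - (\<Sum>z\<in>{z\<in>S. le x z \<and> le z y \<and> z \<noteq> y}. mob_aux (card S) S le x z)"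
proof -
  obtain k0 where k0: "card S = Suc k0" using x fin by (metis card_gt_0_iff emptyE gr0_implies_Suc)
  have "mob_aux k0 S le x z = mob_aux (card S) S le x z" if z: "z \<in> {z\<in>S. le x z \<and> le z y \<and> z \<noteq> y}" for z
  proof (rule mob_stable[OF x])
    show "z \<in> S" using z by simp
    have "{u\<in>S. le x u \<and> le u z} \<subset> S" proof
      show "{u\<in>S. le x u \<and> le u z} \<subseteq> S" by auto
      have "y \<notin> {u\<in>S. le x u \<and> le u z}" using z antisym[of z y] by auto
      then show "{u\<in>S. le x u \<and> le u z} \<noteq> S" using y by blast
    qed
    then have "card {u\<in>S. le x u \<and> le u z} < card S" by (intro psubset_card_mono fin)
    then show "card {u\<in>S. le x u \<and> le u z} \<le> k0" using k0 by simp
    show "card {u\<in>S. le x u \<and> le u z} \<le> card S" by (intro card_mono fin) auto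
  qed
  then show ?thesis using k0 ne l by simp
qed

lemma mob_zero: "x \<in> S \<Longrightarrow> \<not> le x y \<Longrightarrow> mob_aux (card S) S le x y = 0"
  using fin refl by (cases "card S") (auto simp: card_gt_0_iff[symmetric])

lemma mob_one: "mob_aux k S le x x = 1"
  by (cases k) auto

lemma left_right:
  fixes M D :: "'a \<Rightarrow> 'a \<Rightarrow> int"
  assumes M1: "\<And>x. x \<in> S \<Longrightarrow> M x x = 1"
    and M0: "\<And>x y. x \<in> S \<Longrightarrow> y \<in> S \<Longrightarrow> \<not> le x y \<Longrightarrow> M x y = 0"
    and MR: "\<And>x y. x \<in> S \<Longrightarrow> y \<in> S \<Longrightarrow> le x y \<Longrightarrow> x \<noteq> y \<Longrightarrow>
          M x y = - (\<Sum>z\<in>{z\<in>S. le x z \<and> le z y \<and> z \<noteq> y}. M x z)"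
    and D1: "\<And>x. x \<in> S \<Longrightarrow> D x x = 1"
    and D0: "\<And>x y. x \<in> S \<Longrightarrow> y \<in> S \<Longrightarrow> \<not> le x y \<Longrightarrow> D x y = 0"
    and DR: "\<And>x y. x \<in> S \<Longrightarrow> y \<in> S \<Longrightarrow> le x y \<Longrightarrow> x \<noteq> y \<Longrightarrow>
          D x y = - (\<Sum>z\<in>{z\<in>S. le x z \<and> le z y \<and> z \<noteq> x}. D z y)"
    and x: "x \<in> S" and y: "y \<in> S"
  shows "M x y = D x y"
proof -
  have L: "(\<Sum>z\<in>{z\<in>S. le x z \<and> le z y}. M x z) = (if x = y then 1 else 0)"
    if x: "x \<in> S" and y: "y \<in> S" for x y
  proof (cases "x = y")
    case True
    then have "{z\<in>S. le x z \<and> le z y} = {x}" using x refl[of x] antisym[of x] by auto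
    then show ?thesis using True M1 x by simp
  next
    case False
    show ?thesis
    proof (cases "le x y")
      case True
      have e: "{z\<in>S. le x z \<and> le z y} = insert y {z\<in>S. le x z \<and> le z y \<and> z \<noteq> y}"
        using y True refl by auto
      show ?thesis unfolding e using MR[OF x y True False] False fin by simp
    next
      case False2: False
      then have e2: "{z\<in>S. le x z \<and> le z y} = {}" using trans[of x _ y] by blast
      show ?thesis unfolding e2 using False by simp
    qed
  qed
  have R: "(\<Sum>z\<in>{z\<in>S. le x z \<and> le z y}. D z y) = (if x = y then 1 else 0)"
    if x: "x \<in> S" and y: "y \<in> S" for x y
  proof (cases "x = y")
    case True
    then have "{z\<in>S. le x z \<and> le z y} = {x}" using x refl[of x] antisym[of x] by auto
    then show ?thesis using True D1 x by simp
  next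
    case False
    show ?thesis
    proof (cases "le x y")
      case True
      have e: "{z\<in>S. le x z \<and> le z y} = insert x {z\<in>S. le x z \<and> le z y \<and> z \<noteq> x}"
        using x True refl by auto
      show ?thesis unfolding e using DR[OF x y True False] False fin by simp
    next
      case False2: False
      then have e2: "{z\<in>S. le x z \<and> le z y} = {}" using trans[of x _ y] by blast
      show ?thesis unfolding e2 using False by simp
    qed
  qed
  define f where "f z u = (if le x z \<and> le z u \<and> le u y then M x z * D u y else 0)" for z u
  have A: "(\<Sum>z\<in>S. \<Sum>u\<in>S. f z u) = M x y"
  proof -
    have "(\<Sum>u\<in>S. f z u) = (if z = y \<and> le x y then M x y else 0)" if z: "z \<in> S" for z
    proof (cases "le x z \<and> le z y")
      case True
      have "(\<Sum>u\<in>S. f z u) = (\<Sum>u\<in>{u\<in>S. le z u \<and> le u y}. M x z * D u y)"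
        unfolding f_def using True by (simp add: sum.inter_filter[OF fin])
      also have "\<dots> = M x z * (\<Sum>u\<in>{u\<in>S. le z u \<and> le u y}. D u y)"
        by (simp add: sum_distrib_left)
      also have "\<dots> = M x z * (if z = y then 1 else 0)"
        by (simp only: R[OF z y])
      finally show ?thesis using True by auto
    next
      case False
      have "f z u = 0" for u
      proof -
        have "\<not> (le x z \<and> le z u \<and> le u y)" using False trans[of z u y] by blast
        then show ?thesis unfolding f_def by auto
      qed
      then show ?thesis using False refl by auto
    qed
    then have "(\<Sum>z\<in>S. \<Sum>u\<in>S. f z u) = (\<Sum>z\<in>S. if z = y \<and> le x y then M x y else 0)"
      by (rule sum.cong[OF HOL.refl])
    also have "\<dots> = (if le x y then M x y else 0)" using y fin by (simp add: sum.delta)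
    also have "\<dots> = M x y" using M0[OF x y] by auto
    finally show ?thesis .
  qed
  have B: "(\<Sum>u\<in>S. \<Sum>z\<in>S. f z u) = D x y"
  proof -
    have "(\<Sum>z\<in>S. f z u) = (if u = x \<and> le x y then D x y else 0)" if u: "u \<in> S" for u
    proof (cases "le x u \<and> le u y")
      case True
      have "(\<Sum>z\<in>S. f z u) = (\<Sum>z\<in>{z\<in>S. le x z \<and> le z u}. M x z * D u y)"
        unfolding f_def using True by (simp add: sum.inter_filter[OF fin])
      also have "\<dots> = (\<Sum>z\<in>{z\<in>S. le x z \<and> le z u}. M x z) * D u y"
        by (simp add: sum_distrib_right)
      also have "\<dots> = (if x = u then 1 else 0) * D u y"
        by (simp only: L[OF x u])
      finally show ?thesis using True by auto
    next
      case False
      have "f z u = 0" for z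
      proof -
        have "\<not> (le x z \<and> le z u \<and> le u y)" using False trans[of x z u] by blast
        then show ?thesis unfolding f_def by auto
      qed
      then show ?thesis using False refl by auto
    qed
    then have "(\<Sum>u\<in>S. \<Sum>z\<in>S. f z u) = (\<Sum>u\<in>S. if u = x \<and> le x y then D x y else 0)"
      by (rule sum.cong[OF HOL.refl])
    also have "\<dots> = (if le x y then D x y else 0)" using x fin by (simp add: sum.delta)
    also have "\<dots> = D x y" using D0[OF x y] by auto
    finally show ?thesis .
  qed
  show ?thesis using A B sum.swap[of f S S] by simp
qed

end

lemma vle_refl: "vle v v" by (simp add: vle_def)
lemma vle_trans: "vle u v \<Longrightarrow> vle v w \<Longrightarrow> vle u w"
  unfolding vle_def by (metis (no_types, lifting) le_trans)
lemma vle_antisym: "vle u v \<Longrightarrow> vle v u \<Longrightarrow> u = v"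
  unfolding vle_def by (auto intro!: nth_equalityI intro: le_antisym)

theorem mainTheorem16:
  fixes n :: nat and v w :: "nat list"
  assumes "n \<ge> 1" and "v \<in> Nhat n" and "w \<in> Nhat n"
  shows "(vlt v w \<longleftrightarrow> vlt (dagger w) (dagger v))
         \<and> mobius (Nhat n) vle v w = mobius (Nhat n) vle (dagger w) (dagger v)"
proof -
  have inj: "x \<in> Nhat n \<Longrightarrow> y \<in> Nhat n \<Longrightarrow> dagger x = dagger y \<Longrightarrow> x = y" for x y
    by (metis dagger_dagger)
  show ?thesis
  proof
  show "vlt v w \<longleftrightarrow> vlt (dagger w) (dagger v)"
    unfolding vlt_def using dagger_rev[OF assms(2,3)] inj[OF assms(2,3)] by auto
next
  let ?S = "Nhat n"
  interpret fpo ?S vle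
  proof
    show "finite ?S" by (rule finite_Nhat)
  qed (auto simp: vle_refl dest: vle_antisym elim: vle_trans)
  have injS: "inj_on dagger A" if "A \<subseteq> ?S" for A
    using that inj by (intro inj_onI) blast
  show "mobius ?S vle v w = mobius ?S vle (dagger w) (dagger v)"
    unfolding mobius_def
  proof (rule left_right[where M = "\<lambda>x y. mob_aux (card ?S) ?S vle x y"
        and D = "\<lambda>x y. mob_aux (card ?S) ?S vle (dagger y) (dagger x)"])
    show "v \<in> ?S" "w \<in> ?S" using assms by auto
    show "\<And>x. mob_aux (card ?S) ?S vle x x = 1" by (rule mob_one)
    show "\<And>x. mob_aux (card ?S) ?S vle (dagger x) (dagger x) = 1" by (rule mob_one)
    show "\<And>x y. x \<in> ?S \<Longrightarrow> y \<in> ?S \<Longrightarrow> \<not> vle x y \<Longrightarrow> mob_aux (card ?S) ?S vle x y = 0"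
      by (rule mob_zero)
    show "\<And>x y. x \<in> ?S \<Longrightarrow> y \<in> ?S \<Longrightarrow> \<not> vle x y \<Longrightarrow> mob_aux (card ?S) ?S vle (dagger y) (dagger x) = 0"
    proof -
      fix x y assume x: "x \<in> ?S" and y: "y \<in> ?S" and nl: "\<not> vle x y"
      have "\<not> vle (dagger y) (dagger x)" using dagger_rev[OF x y] nl by simp
      then show "mob_aux (card ?S) ?S vle (dagger y) (dagger x) = 0"
        by (rule mob_zero[OF dagger_Nhat[OF y]])
    qed
    show "\<And>x y. x \<in> ?S \<Longrightarrow> y \<in> ?S \<Longrightarrow> vle x y \<Longrightarrow> x \<noteq> y \<Longrightarrow>
          mob_aux (card ?S) ?S vle x y = - (\<Sum>z\<in>{z\<in>?S. vle x z \<and> vle z y \<and> z \<noteq> y}. mob_aux (card ?S) ?S vle x z)"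
      by (rule mob_rec)
    show "mob_aux (card ?S) ?S vle (dagger y) (dagger x) =
          - (\<Sum>z\<in>{z\<in>?S. vle x z \<and> vle z y \<and> z \<noteq> x}. mob_aux (card ?S) ?S vle (dagger y) (dagger z))"
      if x: "x \<in> ?S" and y: "y \<in> ?S" and l: "vle x y" and ne: "x \<noteq> y" for x y
    proof -
      let ?A = "{z\<in>?S. vle x z \<and> vle z y \<and> z \<noteq> x}"
      have dx: "dagger x \<in> ?S" and dy: "dagger y \<in> ?S" using x y dagger_Nhat by auto
      have l': "vle (dagger y) (dagger x)" using dagger_rev[OF x y] l by simp
      have ne': "dagger y \<noteq> dagger x" using ne x y by (metis dagger_dagger)
      have img: "{z\<in>?S. vle (dagger y) z \<and> vle z (dagger x) \<and> z \<noteq> dagger x} = dagger ` ?A"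
      proof
        show "{z\<in>?S. vle (dagger y) z \<and> vle z (dagger x) \<and> z \<noteq> dagger x} \<subseteq> dagger ` ?A"
        proof
          fix z assume z: "z \<in> {z\<in>?S. vle (dagger y) z \<and> vle z (dagger x) \<and> z \<noteq> dagger x}"
          then have zS: "z \<in> ?S" by simp
          have uS: "dagger z \<in> ?S" and dd: "dagger (dagger z) = z"
            using dagger_Nhat[OF zS] dagger_dagger[OF zS] by auto
          have a1: "vle x (dagger z)" using dagger_rev[OF x uS] dd z by simp
          have a2: "vle (dagger z) y" using dagger_rev[OF uS y] dd z by simp
          have a3: "dagger z \<noteq> x" using dd z by auto
          have "dagger z \<in> ?A" using uS a1 a2 a3 by simp
          then show "z \<in> dagger ` ?A" using dagger_dagger[OF zS] by (metis image_eqI)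
        qed
      next
        show "dagger ` ?A \<subseteq> {z\<in>?S. vle (dagger y) z \<and> vle z (dagger x) \<and> z \<noteq> dagger x}"
        proof
          fix z assume "z \<in> dagger ` ?A"
          then obtain u where u: "u \<in> ?A" "z = dagger u" by blast
          then have uS: "u \<in> ?S" by simp
          have b1: "vle (dagger y) z" using dagger_rev[OF uS y] u by simp
          have b2: "vle z (dagger x)" using dagger_rev[OF x uS] u by simp
          have b3: "z \<noteq> dagger x" using u inj[OF uS x] by auto
          show "z \<in> {z\<in>?S. vle (dagger y) z \<and> vle z (dagger x) \<and> z \<noteq> dagger x}"
            using b1 b2 b3 dagger_Nhat[OF uS] u by simp
        qed
      qed
      have "mob_aux (card ?S) ?S vle (dagger y) (dagger x) =
         - (\<Sum>z\<in>{z\<in>?S. vle (dagger y) z \<and> vle z (dagger x) \<and> z \<noteq> dagger x}. mob_aux (card ?S) ?S vle (dagger y) z)"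
        by (rule mob_rec[OF dy dx ne' l'])
      also have "\<dots> = - (\<Sum>z\<in>?A. mob_aux (card ?S) ?S vle (dagger y) (dagger z))"
        unfolding img by (subst sum.reindex) (auto intro: injS)
      finally show ?thesis .
    qed
  qed
qed
qed

end
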